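(* Let $0<p_0\le p<\infty$, $0<q_0\le q<\infty$ and $q/p\le q_0/p_0$. Let $f,g$ be measurable functions such that there exists $\tau_0\in(0,\infty)$ with $\lambda_f(\tau)\le\lambda_g(\tau)$ for $\tau<\tau_0$ and $\lambda_f(\tau)\ge\lambda_g(\tau)$ for $\tau>\tau_0$. Assume that the integral $\int_0^\infty(f^*(t)^{q_0}-g^*(t)^{q_0})\,d(t^{q_0/p_0})$ exists and is $\ge0$, and that $(f^*(t)^q-g^*(t)^q)t^{q/p-1}\in L^1(0,\infty)$. Then $\int_0^\infty(f^*(t)^q-g^*(t)^q)\,d(t^{q/p})\ge 0$. Consequently, if $f,g\in L(p,q)$, then $\|g\|_{L(p,q)}\le\|f\|_{L(p,q)}$.
   Context: $\lambda_f(\tau)=\mu\{|f|>\tau\}$ and $f^*(s)=\inf\{\tau>0:\lambda_f(\tau)\le s\}$ for $s>0$. For $a>0$, $\int_0^\infty h(t)\,d(t^a)$ means $a\int_0^\infty h(t)t^{a-1}\,dt$. For $0<p,q<\infty$ the Lorentz quasi-norm is $\|f\|_{L(p,q)}=\bigl(\int_0^\infty f^*(s)^q\,d(s^{q/p})\bigr)^{1/q}$, and $L(p,q)$ is the set of $f$ with finite quasi-norm. *)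

theory Defs
  imports "HOL-Analysis.Analysis"
begin

definition distr_fun :: "'a measure \<Rightarrow> ('a \<Rightarrow> 'b::real_normed_vector) \<Rightarrow> real \<Rightarrow> ennreal" where
  "distr_fun M f \<tau> = emeasure M {x \<in> space M. norm (f x) > \<tau>}"

text \<open>Decreasing rearrangement f^*(s) = inf{tau > 0 : lambda_f(tau) <= s}, values in [0,infinity]
  (the infimum of the empty set is infinity).\<close>
definition rearr :: "'a measure \<Rightarrow> ('a \<Rightarrow> 'b::real_normed_vector) \<Rightarrow> real \<Rightarrow> ennreal" where
  "rearr M f s = Inf (ennreal ` {\<tau>. \<tau> > 0 \<and> distr_fun M f \<tau> \<le> ennreal s})"

definition epow :: "ennreal \<Rightarrow> real \<Rightarrow> ennreal" where
  "epow x r = (if x = top then top else ennreal (enn2real x powr r))"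

text \<open>Integrand h(t) = f^*(t)^q * d(t^a)/dt = f^*(t)^q * a t^(a-1), a = q/p.\<close>
definition lz_dens :: "'a measure \<Rightarrow> ('a \<Rightarrow> 'b::real_normed_vector) \<Rightarrow> real \<Rightarrow> real \<Rightarrow> real \<Rightarrow> ennreal" where
  "lz_dens M f p q t = epow (rearr M f t) q * ennreal ((q / p) * t powr (q / p - 1))"

definition lorentz_norm :: "'a measure \<Rightarrow> real \<Rightarrow> real \<Rightarrow> ('a \<Rightarrow> 'b::real_normed_vector) \<Rightarrow> ennreal" where
  "lorentz_norm M p q f = epow (\<integral>\<^sup>+ s\<in>{0<..}. lz_dens M f p q s \<partial>lborel) (1 / q)"

definition in_lorentz :: "'a measure \<Rightarrow> real \<Rightarrow> real \<Rightarrow> ('a \<Rightarrow> 'b::real_normed_vector) \<Rightarrow> bool" where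
  "in_lorentz M p q f \<longleftrightarrow> lorentz_norm M p q f < top"

text \<open>The (Lebesgue) integral  int_0^infty (f^*(t)^q - g^*(t)^q) d(t^(q/p))  exists (as an extended
  real number: the difference is a.e. defined, i.e. not of the form infinity - infinity, and
  not both its positive and negative parts have infinite integral) and is >= 0.
  Equivalently: the negative part has finite integral, not exceeding that of the positive part.
  (Truncated subtraction on ennreal yields the positive part.)\<close>
definition lz_diff_integral_nonneg ::
  "'a measure \<Rightarrow> ('a \<Rightarrow> 'b::real_normed_vector) \<Rightarrow> ('a \<Rightarrow> 'b) \<Rightarrow> real \<Rightarrow> real \<Rightarrow> bool" where
  "lz_diff_integral_nonneg M f g p q \<longleftrightarrow>
     (AE t in lborel. t > 0 \<longrightarrow> \<not> (lz_dens M f p q t = top \<and> lz_dens M g p q t = top)) \<and>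
     (\<integral>\<^sup>+ t\<in>{0<..}. (lz_dens M g p q t - lz_dens M f p q t) \<partial>lborel) < top \<and>
     (\<integral>\<^sup>+ t\<in>{0<..}. (lz_dens M g p q t - lz_dens M f p q t) \<partial>lborel)
       \<le> (\<integral>\<^sup>+ t\<in>{0<..}. (lz_dens M f p q t - lz_dens M g p q t) \<partial>lborel)"

end

theory Submission
  imports Defs
begin

lemma antimono_borel:
  fixes h :: "real \<Rightarrow> ennreal"
  assumes "\<And>x y. x \<le> y \<Longrightarrow> h y \<le> h x"
  shows "h \<in> borel_measurable borel"
proof (rule borel_measurableI_greater)
  fix y
  have "is_interval {x. y < h x}"
    unfolding is_interval_1 using assms by (auto intro: less_le_trans)
  then show "{x \<in> space borel. y < h x} \<in> sets borel"
    using real_interval_borel_measurable by simp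
qed

lemma ftc_pow:
  fixes a b s :: real
  assumes "0 \<le> b" "b < a" "0 < s"
  shows "(\<integral>\<^sup>+ \<tau>. ennreal (s * \<tau> powr (s - 1)) * indicator {\<tau>. 0 < \<tau> \<and> b \<le> \<tau> \<and> \<tau> < a} \<tau> \<partial>lborel)
         = ennreal (a powr s - b powr s)"
proof -
  have hi: "((\<lambda>\<tau>. s * \<tau> powr (s - 1)) has_integral (a powr s - b powr s)) {b..a}"
  proof (rule fundamental_theorem_of_calculus_interior)
    show "b \<le> a" using assms by simp
    show "continuous_on {b..a} (\<lambda>\<tau>. \<tau> powr s)"
      using assms by (intro continuous_on_powr') (auto intro: continuous_intros)
    fix x assume "x \<in> {b<..<a}"
    then have "0 < x" using assms by auto
    then show "((\<lambda>\<tau>. \<tau> powr s) has_vector_derivative s * x powr (s - 1)) (at x)"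
      by (auto intro!: derivative_eq_intros simp: has_real_derivative_iff_has_vector_derivative[symmetric])
  qed
  define g where "g \<tau> = indicator {b..a} \<tau> * (s * \<tau> powr (s - 1))" for \<tau> :: real
  have gi: "(g has_integral (a powr s - b powr s)) UNIV"
  proof -
    have "g = (\<lambda>x. if x \<in> {b..a} then s * x powr (s - 1) else 0)"
      by (auto simp: g_def indicator_def fun_eq_iff)
    then show ?thesis using has_integral_restrict_UNIV[THEN iffD2, OF hi] by simp
  qed
  have "integral\<^sup>N lborel g = ennreal (a powr s - b powr s)"
    by (rule nn_integral_has_integral_lborel[OF _ _ gi]) (use assms in \<open>auto simp: g_def[abs_def]\<close>)
  moreover have "(\<integral>\<^sup>+ \<tau>. ennreal (s * \<tau> powr (s - 1)) * indicator {\<tau>. 0 < \<tau> \<and> b \<le> \<tau> \<and> \<tau> < a} \<tau> \<partial>lborel)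
     = integral\<^sup>N lborel g"
  proof (rule nn_integral_cong_AE)
    have "AE x in lborel. x \<noteq> 0" "AE x in lborel. x \<noteq> a" by (rule AE_lborel_singleton)+
    then show "AE x in lborel. ennreal (s * x powr (s - 1)) * indicator {\<tau>. 0 < \<tau> \<and> b \<le> \<tau> \<and> \<tau> < a} x = ennreal (g x)"
      by eventually_elim (use assms in \<open>auto simp: g_def indicator_def\<close>)
  qed
  ultimately show ?thesis by simp
qed

lemma epow_ennreal: "0 \<le> a \<Longrightarrow> epow (ennreal a) s = ennreal (a powr s)"
  by (simp add: epow_def)

lemma epow_top[simp]: "epow top s = top"
  by (simp add: epow_def)

lemma epow_eq_top_iff[simp]: "epow x s = top \<longleftrightarrow> x = top"
  by (simp add: epow_def)

lemma ennreal_unbounded_top: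
  fixes X :: ennreal
  assumes "\<And>r. r \<ge> 0 \<Longrightarrow> ennreal r \<le> X"
  shows "X = top"
proof (rule ccontr)
  assume "X \<noteq> top"
  then obtain r where r: "X = ennreal r" "0 \<le> r" by (cases X) auto
  have "ennreal (r + 1) \<le> ennreal r" using assms[of "r+1"] r by simp
  then show False using r by (simp add: ennreal_le_iff)
qed

lemma epow_diff_layer:
  assumes s: "0 < s" and nt: "\<not> (x = top \<and> y = top)"
  shows "epow x s - epow y s =
    (\<integral>\<^sup>+ \<tau>. ennreal (s * \<tau> powr (s - 1)) * indicator {\<tau>. 0 < \<tau> \<and> y \<le> ennreal \<tau> \<and> ennreal \<tau> < x} \<tau> \<partial>lborel)"
proof (cases "y = top")
  case True
  then have "x \<noteq> top" using nt by auto
  then obtain a where "x = ennreal a" "0 \<le> a" by (cases x) auto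
  moreover have "{\<tau>. 0 < \<tau> \<and> y \<le> ennreal \<tau> \<and> ennreal \<tau> < x} = {}" using True by (auto simp: top_unique)
  ultimately show ?thesis using True by (simp add: epow_ennreal)
next
  case False
  then obtain b where b: "y = ennreal b" "0 \<le> b" by (cases y) auto
  show ?thesis
  proof (cases "x = top")
    case True
    let ?I = "(\<integral>\<^sup>+ \<tau>. ennreal (s * \<tau> powr (s - 1)) * indicator {\<tau>. 0 < \<tau> \<and> y \<le> ennreal \<tau> \<and> ennreal \<tau> < x} \<tau> \<partial>lborel)"
    have "?I = top"
    proof (rule ennreal_unbounded_top)
      fix r :: real assume "0 \<le> r"
      define c where "c = b + 1"
      have c: "0 < c" using b by (simp add: c_def)
      define R where "R = max c ((c powr s + r + 1) powr (1/s)) + 1"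
      have cR: "c < R" by (simp add: R_def)
      have "(c powr s + r + 1) powr (1/s) \<le> R" by (simp add: R_def)
      then have "((c powr s + r + 1) powr (1/s)) powr s \<le> R powr s"
        using s by (intro powr_mono2) auto
      moreover have "((c powr s + r + 1) powr (1/s)) powr s = c powr s + r + 1"
        using s \<open>0 \<le> r\<close> by (simp add: powr_powr)
      ultimately have rle: "r \<le> R powr s - c powr s" by simp
      have "(\<integral>\<^sup>+ \<tau>. ennreal (s * \<tau> powr (s - 1)) * indicator {\<tau>. 0 < \<tau> \<and> c \<le> \<tau> \<and> \<tau> < R} \<tau> \<partial>lborel) \<le> ?I"
        using True b c by (intro nn_integral_mono) (auto simp: indicator_def c_def)
      also have "(\<integral>\<^sup>+ \<tau>. ennreal (s * \<tau> powr (s - 1)) * indicator {\<tau>. 0 < \<tau> \<and> c \<le> \<tau> \<and> \<tau> < R} \<tau> \<partial>lborel) = ennreal (R powr s - c powr s)"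
        using c cR s by (intro ftc_pow) auto
      finally show "ennreal r \<le> ?I" using rle by (meson ennreal_leI order_trans)
    qed
    then show ?thesis using True by simp
  next
    case False
    then obtain a where a: "x = ennreal a" "0 \<le> a" by (cases x) auto
    show ?thesis
    proof (cases "b < a")
      case True
      have set: "{\<tau>. 0 < \<tau> \<and> y \<le> ennreal \<tau> \<and> ennreal \<tau> < x} = {\<tau>. 0 < \<tau> \<and> b \<le> \<tau> \<and> \<tau> < a}"
        using a b by (auto simp: ennreal_le_iff ennreal_less_iff)
      have "epow x s - epow y s = ennreal (a powr s - b powr s)"
        using a b by (simp add: epow_ennreal ennreal_minus)
      then show ?thesis unfolding set using ftc_pow[OF b(2) True s] by simp
    next
      case False
      have set: "{\<tau>. 0 < \<tau> \<and> y \<le> ennreal \<tau> \<and> ennreal \<tau> < x} = {}"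
        using a b False by (auto simp: ennreal_le_iff ennreal_less_iff)
      have "a powr s \<le> b powr s" using False a s by (intro powr_mono2) auto
      then have "epow x s - epow y s = 0"
        using a b by (simp add: epow_ennreal ennreal_minus ennreal_eq_0_iff)
      then show ?thesis unfolding set by simp
    qed
  qed
qed

lemma epow_borel: "(\<lambda>y. epow y r) \<in> borel_measurable borel"
proof -
  have "{y::ennreal \<in> space borel. y = top} = {top}" by auto
  then have "{y::ennreal \<in> space borel. y = top} \<in> sets borel" by simp
  then show ?thesis unfolding epow_def
    by (rule measurable_If[rotated 2]) measurable
qed

lemma epow_measurable[measurable]:
  "F \<in> borel_measurable N \<Longrightarrow> (\<lambda>x. epow (F x) r) \<in> borel_measurable N"
  using measurable_compose[OF _ epow_borel] by blast

lemma distr_mono: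
  assumes "f \<in> borel_measurable M" "\<sigma>1 \<le> \<sigma>2"
  shows "distr_fun M f \<sigma>2 \<le> distr_fun M f \<sigma>1"
  unfolding distr_fun_def
  using assms by (intro emeasure_mono) auto

lemma rearr_antimono:
  "t1 \<le> t2 \<Longrightarrow> rearr M f t2 \<le> rearr M f t1"
  unfolding rearr_def
  by (intro Inf_superset_mono image_mono) (auto intro: order_trans ennreal_leI)

lemma rearr_measurable[measurable]: "rearr M f \<in> borel_measurable borel"
  by (rule antimono_borel) (rule rearr_antimono)

lemma rearr_leI: "0 < \<sigma> \<Longrightarrow> distr_fun M f \<sigma> \<le> ennreal t \<Longrightarrow> rearr M f t \<le> ennreal \<sigma>"
  unfolding rearr_def by (intro Inf_lower) auto

lemma rearr_le_imp:
  assumes "f \<in> borel_measurable M" "rearr M f t \<le> ennreal \<tau>" "0 \<le> \<tau>" "\<tau> < \<sigma>"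
  shows "distr_fun M f \<sigma> \<le> ennreal t"
proof -
  have "rearr M f t < ennreal \<sigma>"
    using assms by (meson le_less_trans ennreal_lessI order_le_less_trans)
  then obtain z where z: "z \<in> ennreal ` {\<tau>. \<tau> > 0 \<and> distr_fun M f \<tau> \<le> ennreal t}" "z < ennreal \<sigma>"
    unfolding rearr_def by (auto simp: Inf_less_iff)
  then obtain \<sigma>' where s': "z = ennreal \<sigma>'" "\<sigma>' > 0" "distr_fun M f \<sigma>' \<le> ennreal t" by auto
  then have "\<sigma>' \<le> \<sigma>" using z(2) by (auto simp: ennreal_less_iff)
  then show ?thesis using distr_mono[OF assms(1), of \<sigma>' \<sigma>] s' by auto
qed

lemma ennreal_dense_above:
  fixes x :: ennreal
  assumes "ennreal a < x"
  shows "\<exists>\<sigma>>a. ennreal \<sigma> < x"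
proof -
  obtain z where z: "ennreal a < z" "z < x" using dense[OF assms] by blast
  then have "z \<noteq> top" by auto
  then obtain r where r: "z = ennreal r" "0 \<le> r" by (cases z) auto
  have "a < r" using z(1) r by (metis ennreal_le_iff not_le order_less_imp_le ennreal_leI)
  then show ?thesis using r z by auto
qed

lemma region_N:
  assumes fm: "f \<in> borel_measurable M" and gm: "g \<in> borel_measurable M"
    and hi: "\<And>\<tau>. \<tau> > \<tau>0 \<Longrightarrow> distr_fun M f \<tau> \<ge> distr_fun M g \<tau>"
    and t: "0 < t" and tau: "0 < \<tau>"
    and F: "rearr M f t \<le> ennreal \<tau>" and G: "ennreal \<tau> < rearr M g t"
  shows "\<tau> \<le> \<tau>0 \<and> (SUP \<sigma>\<in>{\<tau>0<..}. distr_fun M f \<sigma>) \<le> ennreal t"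
proof
  show le: "\<tau> \<le> \<tau>0"
  proof (rule ccontr)
    assume "\<not> \<tau> \<le> \<tau>0"
    then have "\<tau>0 < \<tau>" by simp
    obtain \<sigma> where s: "\<tau> < \<sigma>" "ennreal \<sigma> < rearr M g t" using ennreal_dense_above[OF G] by blast
    have "distr_fun M f \<sigma> \<le> ennreal t" using rearr_le_imp[OF fm F] tau s by simp
    moreover have "distr_fun M g \<sigma> \<le> distr_fun M f \<sigma>" using hi \<open>\<tau>0 < \<tau>\<close> s by simp
    ultimately have "rearr M g t \<le> ennreal \<sigma>" using tau s by (intro rearr_leI) auto
    then show False using s by simp
  qed
  show "(SUP \<sigma>\<in>{\<tau>0<..}. distr_fun M f \<sigma>) \<le> ennreal t"
  proof (rule SUP_least)
    fix \<sigma> assume "\<sigma> \<in> {\<tau>0<..}"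
    then show "distr_fun M f \<sigma> \<le> ennreal t" using rearr_le_imp[OF fm F] tau le by simp
  qed
qed

lemma region_P:
  assumes fm: "f \<in> borel_measurable M" and gm: "g \<in> borel_measurable M"
    and lo: "\<And>\<tau>. 0 < \<tau> \<Longrightarrow> \<tau> < \<tau>0 \<Longrightarrow> distr_fun M f \<tau> \<le> distr_fun M g \<tau>"
    and t0: "0 < \<tau>0"
    and t: "0 < t" and tau: "0 < \<tau>"
    and G: "rearr M g t \<le> ennreal \<tau>" and F: "ennreal \<tau> < rearr M f t"
  shows "\<tau>0 \<le> \<tau> \<and> ennreal t < (SUP \<sigma>\<in>{\<tau>0<..}. distr_fun M f \<sigma>)"
proof
  show le: "\<tau>0 \<le> \<tau>"
  proof (rule ccontr)
    assume "\<not> \<tau>0 \<le> \<tau>"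
    then have "\<tau> < \<tau>0" by simp
    obtain \<sigma> where s: "\<tau> < \<sigma>" "ennreal \<sigma> < rearr M f t" using ennreal_dense_above[OF F] by blast
    define \<sigma>' where "\<sigma>' = min \<sigma> ((\<tau> + \<tau>0) / 2)"
    have m: "(\<tau> + \<tau>0) / 2 < \<tau>0" "\<tau> < (\<tau> + \<tau>0) / 2" using \<open>\<tau> < \<tau>0\<close> by simp_all
    have s': "\<tau> < \<sigma>'" "\<sigma>' < \<tau>0" "\<sigma>' \<le> \<sigma>" using s m by (auto simp: \<sigma>'_def min_less_iff_disj)
    have "ennreal \<sigma>' < rearr M f t" using s s' by (meson ennreal_leI le_less_trans)
    have "distr_fun M g \<sigma>' \<le> ennreal t" using rearr_le_imp[OF gm G] tau s' by simp
    moreover have "distr_fun M f \<sigma>' \<le> distr_fun M g \<sigma>'" using lo tau s' by simp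
    ultimately have "rearr M f t \<le> ennreal \<sigma>'" using tau s' by (intro rearr_leI) auto
    then show False using \<open>ennreal \<sigma>' < rearr M f t\<close> by simp
  qed
  have "ennreal \<tau>0 < rearr M f t" using le F by (meson ennreal_leI le_less_trans)
  then obtain \<sigma> where s: "\<tau>0 < \<sigma>" "ennreal \<sigma> < rearr M f t" using ennreal_dense_above by blast
  have "\<not> distr_fun M f \<sigma> \<le> ennreal t"
  proof
    assume "distr_fun M f \<sigma> \<le> ennreal t"
    then have "rearr M f t \<le> ennreal \<sigma>" using s t0 by (intro rearr_leI) auto
    then show False using s by simp
  qed
  then have "ennreal t < distr_fun M f \<sigma>" by simp
  also have "\<dots> \<le> (SUP \<sigma>\<in>{\<tau>0<..}. distr_fun M f \<sigma>)" using s by (intro SUP_upper) auto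
  finally show "ennreal t < (SUP \<sigma>\<in>{\<tau>0<..}. distr_fun M f \<sigma>)" .
qed

lemma lz_diff_eq:
  assumes t: "0 < t" and p: "0 < p" and q: "0 < q"
    and nt: "\<not> (rearr M f t = top \<and> rearr M g t = top)"
  shows "lz_dens M f p q t - lz_dens M g p q t =
    (\<integral>\<^sup>+ \<tau>. ennreal (q * \<tau> powr (q - 1) * ((q / p) * t powr (q / p - 1)))
       * indicator {\<tau>. 0 < \<tau> \<and> rearr M g t \<le> ennreal \<tau> \<and> ennreal \<tau> < rearr M f t} \<tau> \<partial>lborel)"
proof -
  define w where "w = (q / p) * t powr (q / p - 1)"
  have w0: "0 \<le> w" using p q by (simp add: w_def)
  define S where "S = {\<tau>. 0 < \<tau> \<and> rearr M g t \<le> ennreal \<tau> \<and> ennreal \<tau> < rearr M f t}"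
  have Sm: "S \<in> sets borel" unfolding S_def by measurable
  have "lz_dens M f p q t - lz_dens M g p q t
      = ennreal w * (epow (rearr M f t) q - epow (rearr M g t) q)"
    unfolding lz_dens_def w_def[symmetric]
    by (subst ennreal_right_diff_distrib) (simp_all add: mult.commute)
  also have "\<dots> = ennreal w * (\<integral>\<^sup>+ \<tau>. ennreal (q * \<tau> powr (q - 1)) * indicator S \<tau> \<partial>lborel)"
    unfolding S_def using epow_diff_layer[OF q nt] by simp
  also have "\<dots> = (\<integral>\<^sup>+ \<tau>. ennreal w * (ennreal (q * \<tau> powr (q - 1)) * indicator S \<tau>) \<partial>lborel)"
    using Sm by (subst nn_integral_cmult) auto
  also have "\<dots> = (\<integral>\<^sup>+ \<tau>. ennreal (q * \<tau> powr (q - 1) * w) * indicator S \<tau> \<partial>lborel)"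
    using w0 q by (intro nn_integral_cong) (simp add: ennreal_mult mult_ac)
  finally show ?thesis unfolding S_def w_def .
qed

lemma weight_N:
  fixes q q0 a a0 \<tau> \<tau>0 t l :: real
  assumes "0 < q0" "q0 \<le> q" "0 < a0" "a \<le> a0" "0 < a" "0 < \<tau>" "\<tau> \<le> \<tau>0" "0 < l" "l \<le> t"
  shows "q * \<tau> powr (q - 1) * (a * t powr (a - 1)) \<le>
    ((q / q0) * \<tau>0 powr (q - q0) * (a / a0) * l powr (a - a0)) * (q0 * \<tau> powr (q0 - 1) * (a0 * t powr (a0 - 1)))"
proof -
  have e1: "\<tau> powr (q - 1) = \<tau> powr (q - q0) * \<tau> powr (q0 - 1)" by (simp add: powr_add[symmetric])
  have e2: "t powr (a - 1) = t powr (a - a0) * t powr (a0 - 1)" by (simp add: powr_add[symmetric])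
  have m1: "\<tau> powr (q - q0) \<le> \<tau>0 powr (q - q0)" using assms by (intro powr_mono2) auto
  have m2: "t powr (a - a0) \<le> l powr (a - a0)" using assms by (intro powr_mono2') auto
  have m: "\<tau> powr (q - q0) * t powr (a - a0) \<le> \<tau>0 powr (q - q0) * l powr (a - a0)"
    using m1 m2 by (intro mult_mono) auto
  have pos: "0 \<le> q * a * \<tau> powr (q0 - 1) * t powr (a0 - 1)" using assms by simp
  have "q * \<tau> powr (q - 1) * (a * t powr (a - 1)) = (\<tau> powr (q - q0) * t powr (a - a0)) * (q * a * \<tau> powr (q0 - 1) * t powr (a0 - 1))"
    unfolding e1 e2 by (simp add: mult_ac)
  also have "\<dots> \<le> (\<tau>0 powr (q - q0) * l powr (a - a0)) * (q * a * \<tau> powr (q0 - 1) * t powr (a0 - 1))"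
    using m pos by (rule mult_right_mono)
  also have "\<dots> = ((q / q0) * \<tau>0 powr (q - q0) * (a / a0) * l powr (a - a0)) * (q0 * \<tau> powr (q0 - 1) * (a0 * t powr (a0 - 1)))"
    using assms by (simp add: field_simps)
  finally show ?thesis .
qed

lemma weight_P:
  fixes q q0 a a0 \<tau> \<tau>0 t l :: real
  assumes "0 < q0" "q0 \<le> q" "0 < a0" "a \<le> a0" "0 < a" "0 < \<tau>0" "\<tau>0 \<le> \<tau>" "0 < t" "t \<le> l"
  shows "((q / q0) * \<tau>0 powr (q - q0) * (a / a0) * l powr (a - a0)) * (q0 * \<tau> powr (q0 - 1) * (a0 * t powr (a0 - 1)))
     \<le> q * \<tau> powr (q - 1) * (a * t powr (a - 1))"
proof -
  have e1: "\<tau> powr (q - 1) = \<tau> powr (q - q0) * \<tau> powr (q0 - 1)" by (simp add: powr_add[symmetric])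
  have e2: "t powr (a - 1) = t powr (a - a0) * t powr (a0 - 1)" by (simp add: powr_add[symmetric])
  have m1: "\<tau>0 powr (q - q0) \<le> \<tau> powr (q - q0)" using assms by (intro powr_mono2) auto
  have m2: "l powr (a - a0) \<le> t powr (a - a0)" using assms by (intro powr_mono2') auto
  have m: "\<tau>0 powr (q - q0) * l powr (a - a0) \<le> \<tau> powr (q - q0) * t powr (a - a0)"
    using m1 m2 by (intro mult_mono) auto
  have pos: "0 \<le> q * a * \<tau> powr (q0 - 1) * t powr (a0 - 1)" using assms by simp
  have "((q / q0) * \<tau>0 powr (q - q0) * (a / a0) * l powr (a - a0)) * (q0 * \<tau> powr (q0 - 1) * (a0 * t powr (a0 - 1)))
     = (\<tau>0 powr (q - q0) * l powr (a - a0)) * (q * a * \<tau> powr (q0 - 1) * t powr (a0 - 1))"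
    using assms by (simp add: field_simps)
  also have "\<dots> \<le> (\<tau> powr (q - q0) * t powr (a - a0)) * (q * a * \<tau> powr (q0 - 1) * t powr (a0 - 1))"
    using m pos by (rule mult_right_mono)
  also have "\<dots> = q * \<tau> powr (q - 1) * (a * t powr (a - 1))"
    unfolding e1 e2 by (simp add: mult_ac)
  finally show ?thesis .
qed

lemma lz_dens_measurable[measurable]: "(\<lambda>t. lz_dens M f p q t) \<in> borel_measurable borel"
  unfolding lz_dens_def by measurable

lemma lz_top_iff:
  assumes "0 < t" "0 < p" "0 < q"
  shows "lz_dens M f p q t = top \<longleftrightarrow> rearr M f t = top"
proof -
  have "0 < (q / p) * t powr (q / p - 1)" using assms by simp
  then show ?thesis unfolding lz_dens_def using assms by (simp add: ennreal_mult_eq_top_iff)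
qed

lemma core:
  fixes M :: "'a measure"
    and f g :: "'a \<Rightarrow> 'b::{real_normed_vector, second_countable_topology}"
    and p p0 q q0 \<tau>0 :: real
  assumes p0: "0 < p0" "p0 \<le> p" and q0: "0 < q0" "q0 \<le> q" and qp: "q / p \<le> q0 / p0"
    and fm: "f \<in> borel_measurable M" and gm: "g \<in> borel_measurable M"
    and t0: "0 < \<tau>0"
    and lo: "\<And>\<tau>. 0 < \<tau> \<Longrightarrow> \<tau> < \<tau>0 \<Longrightarrow> distr_fun M f \<tau> \<le> distr_fun M g \<tau>"
    and hi: "\<And>\<tau>. \<tau> > \<tau>0 \<Longrightarrow> distr_fun M f \<tau> \<ge> distr_fun M g \<tau>"
    and hyp: "lz_diff_integral_nonneg M f g p0 q0"
  shows "(\<integral>\<^sup>+ t\<in>{0<..}. (lz_dens M g p q t - lz_dens M f p q t) \<partial>lborel)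
       \<le> (\<integral>\<^sup>+ t\<in>{0<..}. (lz_dens M f p q t - lz_dens M g p q t) \<partial>lborel)"
proof -
  have p: "0 < p" using p0 by simp
  have q: "0 < q" using q0 by simp
  define F where "F = rearr M f"
  define G where "G = rearr M g"
  define a where "a = q / p"
  define a0 where "a0 = q0 / p0"
  have a: "0 < a" "0 < a0" "a \<le> a0" using p q p0 q0 qp by (simp_all add: a_def a0_def)
  define h where "h t \<tau> = q * \<tau> powr (q - 1) * (a * t powr (a - 1))" for t \<tau> :: real
  define h0 where "h0 t \<tau> = q0 * \<tau> powr (q0 - 1) * (a0 * t powr (a0 - 1))" for t \<tau> :: real
  define Rn where "Rn t = {\<tau>. 0 < \<tau> \<and> F t \<le> ennreal \<tau> \<and> ennreal \<tau> < G t}" for t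
  define Rp where "Rp t = {\<tau>. 0 < \<tau> \<and> G t \<le> ennreal \<tau> \<and> ennreal \<tau> < F t}" for t
  define L where "L = (SUP \<sigma>\<in>{\<tau>0<..}. distr_fun M f \<sigma>)"
  have Rn_m: "Rn t \<in> sets borel" for t unfolding Rn_def by measurable
  have Rp_m: "Rp t \<in> sets borel" for t unfolding Rp_def by measurable
  have h0pos: "0 < h0 t \<tau>" if "0 < t" "0 < \<tau>" for t \<tau> using that q0 a by (simp add: h0_def)
  have hpos: "0 \<le> h t \<tau>" for t \<tau> using q a by (simp add: h_def)

  have hyp': "AE t in lborel. 0 < t \<longrightarrow> \<not> (lz_dens M f p0 q0 t = top \<and> lz_dens M g p0 q0 t = top)"
    "(\<integral>\<^sup>+ t\<in>{0<..}. (lz_dens M g p0 q0 t - lz_dens M f p0 q0 t) \<partial>lborel)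
       \<le> (\<integral>\<^sup>+ t\<in>{0<..}. (lz_dens M f p0 q0 t - lz_dens M g p0 q0 t) \<partial>lborel)"
    using hyp unfolding lz_diff_integral_nonneg_def by auto
  have nb: "AE t in lborel. 0 < t \<longrightarrow> \<not> (F t = top \<and> G t = top)"
    using hyp'(1) by eventually_elim (use p0 q0 in \<open>auto simp: lz_top_iff F_def G_def\<close>)

  have eqN: "lz_dens M g p q t - lz_dens M f p q t = (\<integral>\<^sup>+ \<tau>. ennreal (h t \<tau>) * indicator (Rn t) \<tau> \<partial>lborel)"
    if "0 < t" "\<not> (F t = top \<and> G t = top)" for t
    using lz_diff_eq[of t p q M g f] that p q unfolding h_def Rn_def F_def G_def a_def by auto
  have eqP: "lz_dens M f p q t - lz_dens M g p q t = (\<integral>\<^sup>+ \<tau>. ennreal (h t \<tau>) * indicator (Rp t) \<tau> \<partial>lborel)"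
    if "0 < t" "\<not> (F t = top \<and> G t = top)" for t
    using lz_diff_eq[of t p q M f g] that p q unfolding h_def Rp_def F_def G_def a_def by auto
  have eqN0: "lz_dens M g p0 q0 t - lz_dens M f p0 q0 t = (\<integral>\<^sup>+ \<tau>. ennreal (h0 t \<tau>) * indicator (Rn t) \<tau> \<partial>lborel)"
    if "0 < t" "\<not> (F t = top \<and> G t = top)" for t
    using lz_diff_eq[of t p0 q0 M g f] that p0 q0 unfolding h0_def Rn_def F_def G_def a0_def by auto
  have eqP0: "lz_dens M f p0 q0 t - lz_dens M g p0 q0 t = (\<integral>\<^sup>+ \<tau>. ennreal (h0 t \<tau>) * indicator (Rp t) \<tau> \<partial>lborel)"
    if "0 < t" "\<not> (F t = top \<and> G t = top)" for t
    using lz_diff_eq[of t p0 q0 M f g] that p0 q0 unfolding h0_def Rp_def F_def G_def a0_def by auto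

  have rN: "\<tau> \<le> \<tau>0 \<and> L \<le> ennreal t" if "0 < t" "\<tau> \<in> Rn t" for t \<tau>
    unfolding L_def by (rule region_N[OF fm gm]) (use hi that in \<open>auto simp: Rn_def F_def G_def\<close>)
  have rP: "\<tau>0 \<le> \<tau> \<and> ennreal t < L" if "0 < t" "\<tau> \<in> Rp t" for t \<tau>
    unfolding L_def by (rule region_P[OF fm gm]) (use lo t0 that in \<open>auto simp: Rp_def F_def G_def\<close>)

  obtain K where KN: "\<And>t \<tau>. 0 < t \<Longrightarrow> \<tau> \<in> Rn t \<Longrightarrow> ennreal (h t \<tau>) \<le> K * ennreal (h0 t \<tau>)"
    and KP: "\<And>t \<tau>. 0 < t \<Longrightarrow> \<tau> \<in> Rp t \<Longrightarrow> K * ennreal (h0 t \<tau>) \<le> ennreal (h t \<tau>)"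
  proof (cases "L = top")
    case True
    show ?thesis
    proof (rule that[of 0])
      fix t \<tau> assume "0 < t" "\<tau> \<in> Rn t"
      then have "L \<le> ennreal t" using rN by auto
      then show "ennreal (h t \<tau>) \<le> 0 * ennreal (h0 t \<tau>)" using True by (simp add: top_unique)
    qed simp
  next
    case Lnt: False
    show ?thesis
    proof (cases "L = 0")
      case True
      show ?thesis
      proof (rule that[of top])
        fix t \<tau> assume "0 < t" "\<tau> \<in> Rn t"
        then have "0 < h0 t \<tau>" using h0pos by (auto simp: Rn_def)
        then show "ennreal (h t \<tau>) \<le> top * ennreal (h0 t \<tau>)" by (simp add: ennreal_mult_top)
      next
        fix t \<tau> assume "0 < t" "\<tau> \<in> Rp t"
        then have "ennreal t < L" using rP by auto
        then show "top * ennreal (h0 t \<tau>) \<le> ennreal (h t \<tau>)" using True by simp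
      qed
    next
      case False
      obtain l where l: "L = ennreal l" "0 \<le> l" using Lnt by (cases L) auto
      then have l0: "0 < l" using False by (cases "l = 0") auto
      define K0 where "K0 = (q / q0) * \<tau>0 powr (q - q0) * (a / a0) * l powr (a - a0)"
      have K0: "0 \<le> K0" using q q0 a by (simp add: K0_def)
      show ?thesis
      proof (rule that[of "ennreal K0"])
        fix t \<tau> assume tt: "0 < t" "\<tau> \<in> Rn t"
        then have "\<tau> \<le> \<tau>0" "l \<le> t" using rN[OF tt] l by (auto simp: ennreal_le_iff)
        then have "h t \<tau> \<le> K0 * h0 t \<tau>" unfolding h_def h0_def K0_def
          using tt q0 a l0 by (intro weight_N) (auto simp: Rn_def)
        then have "ennreal (h t \<tau>) \<le> ennreal (K0 * h0 t \<tau>)" by (rule ennreal_leI)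
        then show "ennreal (h t \<tau>) \<le> ennreal K0 * ennreal (h0 t \<tau>)"
          using K0 h0pos[of t \<tau>] tt by (simp add: ennreal_mult Rn_def)
      next
        fix t \<tau> assume tt: "0 < t" "\<tau> \<in> Rp t"
        then have "\<tau>0 \<le> \<tau>" "t \<le> l" using rP[OF tt] l by (auto simp: ennreal_less_iff)
        then have "K0 * h0 t \<tau> \<le> h t \<tau>" unfolding h_def h0_def K0_def
          using tt q0 a l0 t0 by (intro weight_P) (auto simp: Rp_def)
        then have "ennreal (K0 * h0 t \<tau>) \<le> ennreal (h t \<tau>)" by (rule ennreal_leI)
        then show "ennreal K0 * ennreal (h0 t \<tau>) \<le> ennreal (h t \<tau>)"
          using K0 h0pos[of t \<tau>] tt by (simp add: ennreal_mult Rp_def)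
      qed
    qed
  qed

  have stepN: "(\<integral>\<^sup>+ t\<in>{0<..}. (lz_dens M g p q t - lz_dens M f p q t) \<partial>lborel)
      \<le> K * (\<integral>\<^sup>+ t\<in>{0<..}. (lz_dens M g p0 q0 t - lz_dens M f p0 q0 t) \<partial>lborel)"
  proof -
    have "(\<integral>\<^sup>+ t\<in>{0<..}. (lz_dens M g p q t - lz_dens M f p q t) \<partial>lborel)
       \<le> (\<integral>\<^sup>+ t. K * ((lz_dens M g p0 q0 t - lz_dens M f p0 q0 t) * indicator {0<..} t) \<partial>lborel)"
    proof (rule nn_integral_mono_AE)
      show "AE t in lborel. (lz_dens M g p q t - lz_dens M f p q t) * indicator {0<..} t
          \<le> K * ((lz_dens M g p0 q0 t - lz_dens M f p0 q0 t) * indicator {0<..} t)"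
        using nb
      proof eventually_elim
        case (elim t)
        show ?case
        proof (cases "0 < t")
          case True
          then have nt: "\<not> (F t = top \<and> G t = top)" using elim by auto
          have "(\<integral>\<^sup>+ \<tau>. ennreal (h t \<tau>) * indicator (Rn t) \<tau> \<partial>lborel)
              \<le> (\<integral>\<^sup>+ \<tau>. K * (ennreal (h0 t \<tau>) * indicator (Rn t) \<tau>) \<partial>lborel)"
            using KN[OF True] by (intro nn_integral_mono) (auto simp: indicator_def)
          also have "\<dots> = K * (\<integral>\<^sup>+ \<tau>. ennreal (h0 t \<tau>) * indicator (Rn t) \<tau> \<partial>lborel)"
            using Rn_m[of t] by (subst nn_integral_cmult) (auto simp: h0_def)
          finally show ?thesis using eqN[OF True nt] eqN0[OF True nt] True by simp
        qed simp
      qed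
    qed
    also have "\<dots> = K * (\<integral>\<^sup>+ t\<in>{0<..}. (lz_dens M g p0 q0 t - lz_dens M f p0 q0 t) \<partial>lborel)"
      by (subst nn_integral_cmult) auto
    finally show ?thesis .
  qed
  have stepP: "K * (\<integral>\<^sup>+ t\<in>{0<..}. (lz_dens M f p0 q0 t - lz_dens M g p0 q0 t) \<partial>lborel)
      \<le> (\<integral>\<^sup>+ t\<in>{0<..}. (lz_dens M f p q t - lz_dens M g p q t) \<partial>lborel)"
  proof -
    have "K * (\<integral>\<^sup>+ t\<in>{0<..}. (lz_dens M f p0 q0 t - lz_dens M g p0 q0 t) \<partial>lborel)
       = (\<integral>\<^sup>+ t. K * ((lz_dens M f p0 q0 t - lz_dens M g p0 q0 t) * indicator {0<..} t) \<partial>lborel)"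
      by (subst nn_integral_cmult) auto
    also have "\<dots> \<le> (\<integral>\<^sup>+ t\<in>{0<..}. (lz_dens M f p q t - lz_dens M g p q t) \<partial>lborel)"
    proof (rule nn_integral_mono_AE)
      show "AE t in lborel. K * ((lz_dens M f p0 q0 t - lz_dens M g p0 q0 t) * indicator {0<..} t)
          \<le> (lz_dens M f p q t - lz_dens M g p q t) * indicator {0<..} t"
        using nb
      proof eventually_elim
        case (elim t)
        show ?case
        proof (cases "0 < t")
          case True
          then have nt: "\<not> (F t = top \<and> G t = top)" using elim by auto
          have "K * (\<integral>\<^sup>+ \<tau>. ennreal (h0 t \<tau>) * indicator (Rp t) \<tau> \<partial>lborel)
              = (\<integral>\<^sup>+ \<tau>. K * (ennreal (h0 t \<tau>) * indicator (Rp t) \<tau>) \<partial>lborel)"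
            using Rp_m[of t] by (subst nn_integral_cmult) (auto simp: h0_def)
          also have "\<dots> \<le> (\<integral>\<^sup>+ \<tau>. ennreal (h t \<tau>) * indicator (Rp t) \<tau> \<partial>lborel)"
            using KP[OF True] by (intro nn_integral_mono) (auto simp: indicator_def)
          finally show ?thesis using eqP[OF True nt] eqP0[OF True nt] True by simp
        qed simp
      qed
    qed
    finally show ?thesis .
  qed
  have "K * (\<integral>\<^sup>+ t\<in>{0<..}. (lz_dens M g p0 q0 t - lz_dens M f p0 q0 t) \<partial>lborel)
      \<le> K * (\<integral>\<^sup>+ t\<in>{0<..}. (lz_dens M f p0 q0 t - lz_dens M g p0 q0 t) \<partial>lborel)"
    using hyp'(2) by (rule mult_left_mono) simp
  then show ?thesis using stepN stepP by (meson order_trans)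
qed

lemma lz_minus_real:
  assumes "0 < t" "0 < p" "0 < q" "rearr M f t \<noteq> top" "rearr M g t \<noteq> top"
  shows "lz_dens M f p q t - lz_dens M g p q t =
    ennreal ((enn2real (rearr M f t) powr q - enn2real (rearr M g t) powr q) * ((q / p) * t powr (q / p - 1)))"
proof -
  obtain x where x: "rearr M f t = ennreal x" "0 \<le> x" using assms(4) by (cases "rearr M f t") auto
  obtain y where y: "rearr M g t = ennreal y" "0 \<le> y" using assms(5) by (cases "rearr M g t") auto
  have w: "0 \<le> (q / p) * t powr (q / p - 1)" using assms by simp
  define w where "w = (q / p) * t powr (q / p - 1)"
  have "lz_dens M f p q t - lz_dens M g p q t = ennreal (x powr q * w) - ennreal (y powr q * w)"
    unfolding lz_dens_def x y w_def[symmetric] using x(2) y(2) w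
    by (simp add: epow_ennreal ennreal_mult[symmetric] w_def)
  also have "\<dots> = ennreal (x powr q * w - y powr q * w)"
  proof (rule ennreal_minus)
    have "0 \<le> w" using w by (simp add: w_def)
    then show "0 \<le> y powr q * w" by simp
  qed
  also have "x powr q * w - y powr q * w = (x powr q - y powr q) * w" by (simp add: left_diff_distrib)
  finally show ?thesis unfolding x y w_def using x(2) y(2) by simp
qed

lemma ennreal_min_split: "(b::ennreal) = min a b + (b - a)"
  by (cases "a \<le> b") (auto simp: add_diff_inverse_ennreal min_def diff_eq_0_iff_ennreal less_top[symmetric])

lemma epow_mono: "x \<le> y \<Longrightarrow> 0 \<le> r \<Longrightarrow> epow x r \<le> epow y r"
proof (cases "y = top")
  case False
  assume xy: "x \<le> y" and r: "0 \<le> r"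
  then have "x \<noteq> top" using False by (auto simp: top_unique)
  then obtain a b where "x = ennreal a" "0 \<le> a" "y = ennreal b" "0 \<le> b" using False by (cases x; cases y) auto
  then show ?thesis using xy r by (auto simp: epow_ennreal ennreal_le_iff intro!: ennreal_leI powr_mono2)
qed (simp add: epow_def)

theorem mainTheorem7:
  fixes M :: "'a measure"
    and f g :: "'a \<Rightarrow> 'b::{real_normed_vector, second_countable_topology}"
    and p p0 q q0 \<tau>0 :: real
  assumes "0 < p0" "p0 \<le> p" "0 < q0" "q0 \<le> q" "q / p \<le> q0 / p0"
    and "f \<in> borel_measurable M" "g \<in> borel_measurable M"
    and "0 < \<tau>0"
    and "\<And>\<tau>. 0 < \<tau> \<Longrightarrow> \<tau> < \<tau>0 \<Longrightarrow> distr_fun M f \<tau> \<le> distr_fun M g \<tau>"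
    and "\<And>\<tau>. \<tau> > \<tau>0 \<Longrightarrow> distr_fun M f \<tau> \<ge> distr_fun M g \<tau>"
    and "lz_diff_integral_nonneg M f g p0 q0"
  shows "(((AE t in lborel. t > 0 \<longrightarrow> rearr M f t < top \<and> rearr M g t < top) \<and>
          set_integrable lborel {0<..}
            (\<lambda>t. (enn2real (rearr M f t) powr q - enn2real (rearr M g t) powr q) * t powr (q / p - 1)))
         \<longrightarrow> (\<integral>t\<in>{0<..}. (enn2real (rearr M f t) powr q - enn2real (rearr M g t) powr q)
                             * ((q / p) * t powr (q / p - 1)) \<partial>lborel) \<ge> 0) \<and>
         (in_lorentz M p q f \<and> in_lorentz M p q g \<longrightarrow> lorentz_norm M p q g \<le> lorentz_norm M p q f)"
proof -
  have p: "0 < p" and q: "0 < q" using assms by auto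
  have core: "(\<integral>\<^sup>+ t\<in>{0<..}. (lz_dens M g p q t - lz_dens M f p q t) \<partial>lborel)
       \<le> (\<integral>\<^sup>+ t\<in>{0<..}. (lz_dens M f p q t - lz_dens M g p q t) \<partial>lborel)"
    by (rule core[OF assms])
  let ?N = "(\<integral>\<^sup>+ t\<in>{0<..}. (lz_dens M g p q t - lz_dens M f p q t) \<partial>lborel)"
  let ?P = "(\<integral>\<^sup>+ t\<in>{0<..}. (lz_dens M f p q t - lz_dens M g p q t) \<partial>lborel)"
  have part1: "(\<integral>t\<in>{0<..}. (enn2real (rearr M f t) powr q - enn2real (rearr M g t) powr q)
                             * ((q / p) * t powr (q / p - 1)) \<partial>lborel) \<ge> 0"
    if fin: "AE t in lborel. t > 0 \<longrightarrow> rearr M f t < top \<and> rearr M g t < top"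
      and si: "set_integrable lborel {0<..}
            (\<lambda>t. (enn2real (rearr M f t) powr q - enn2real (rearr M g t) powr q) * t powr (q / p - 1))"
  proof -
    define u where "u t = (enn2real (rearr M f t) powr q - enn2real (rearr M g t) powr q) * ((q / p) * t powr (q / p - 1))" for t
    define v where "v t = indicator {0<..} t * u t" for t :: real
    have "set_integrable lborel {0<..} (\<lambda>t. (q / p) * ((enn2real (rearr M f t) powr q - enn2real (rearr M g t) powr q) * t powr (q / p - 1)))"
      using si by (rule set_integrable_mult_right)
    then have "set_integrable lborel {0<..} u"
      unfolding u_def by (simp add: mult_ac)
    then have vi: "integrable lborel v" unfolding set_integrable_def v_def by simp
    have sv: "(\<integral>t\<in>{0<..}. u t \<partial>lborel) = integral\<^sup>L lborel v"
      unfolding set_lebesgue_integral_def v_def by simp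
    have eP: "(\<integral>\<^sup>+ t. ennreal (v t) \<partial>lborel) = ?P"
    proof (rule nn_integral_cong_AE)
      show "AE t in lborel. ennreal (v t) = (lz_dens M f p q t - lz_dens M g p q t) * indicator {0<..} t"
        using fin
      proof eventually_elim
        case (elim t)
        show ?case
        proof (cases "0 < t")
          case True
          then show ?thesis using elim lz_minus_real[of t p q M f g] p q by (simp add: v_def u_def less_top)
        qed (simp add: v_def)
      qed
    qed
    have eN: "(\<integral>\<^sup>+ t. ennreal (- v t) \<partial>lborel) = ?N"
    proof (rule nn_integral_cong_AE)
      show "AE t in lborel. ennreal (- v t) = (lz_dens M g p q t - lz_dens M f p q t) * indicator {0<..} t"
        using fin
      proof eventually_elim
        case (elim t)
        show ?case
        proof (cases "0 < t")
          case True
          then have "lz_dens M g p q t - lz_dens M f p q t = ennreal (- u t)"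
            using elim lz_minus_real[of t p q M g f] p q by (simp add: u_def algebra_simps less_top)
          then show ?thesis using True by (simp add: v_def)
        qed (simp add: v_def)
      qed
    qed
    have Pfin: "?P < top" using integrableD(2)[OF vi] eP by (simp add: less_top)
    have "enn2real ?N \<le> enn2real ?P" using core Pfin by (rule enn2real_mono)
    then show ?thesis
      unfolding u_def[symmetric] sv real_lebesgue_integral_def[OF vi] eP eN by simp
  qed
  have "(\<integral>\<^sup>+ t\<in>{0<..}. lz_dens M g p q t \<partial>lborel) \<le> (\<integral>\<^sup>+ t\<in>{0<..}. lz_dens M f p q t \<partial>lborel)"
  proof -
    let ?m = "\<lambda>t. min (lz_dens M f p q t) (lz_dens M g p q t) * indicator {0<..} t"
    have "(\<integral>\<^sup>+ t\<in>{0<..}. lz_dens M g p q t \<partial>lborel) = (\<integral>\<^sup>+ t. ?m t + (lz_dens M g p q t - lz_dens M f p q t) * indicator {0<..} t \<partial>lborel)"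
      by (intro nn_integral_cong) (subst ennreal_min_split[of _ "lz_dens M f p q _"], simp add: distrib_right)
    also have "\<dots> = (\<integral>\<^sup>+ t. ?m t \<partial>lborel) + ?N"
      by (rule nn_integral_add) auto
    also have "\<dots> \<le> (\<integral>\<^sup>+ t. ?m t \<partial>lborel) + ?P"
      using core by (rule add_left_mono)
    also have "\<dots> = (\<integral>\<^sup>+ t. ?m t + (lz_dens M f p q t - lz_dens M g p q t) * indicator {0<..} t \<partial>lborel)"
      by (rule nn_integral_add[symmetric]) auto
    also have "\<dots> = (\<integral>\<^sup>+ t\<in>{0<..}. lz_dens M f p q t \<partial>lborel)"
      by (intro nn_integral_cong) (subst (2) ennreal_min_split[of _ "lz_dens M g p q _"], simp add: distrib_right min.commute)
    finally show ?thesis .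
  qed
  then have "lorentz_norm M p q g \<le> lorentz_norm M p q f"
    unfolding lorentz_norm_def using q by (intro epow_mono) auto
  then show ?thesis using part1 by blast
qed

end
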